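(* Let $\mathrm{k}\ge1$ and let $a_j$ ($0\le j\le\mathrm{k}-1$), $b_j$ ($0\le j\le\mathrm{k}$), $c_j$ ($0\le j\le\mathrm{k}-1$) be real coefficients with $a_0,b_0,c_0>0$ of a zero-stable $\mathrm{k}$-step IEMS method, extended by $a_j=c_j=0$ for $j\ge\mathrm{k}$ and $b_j=0$ for $j\ge\mathrm{k}+1$. With $a(\theta)=\sum_{j=0}^{\mathrm{k}-1}a_je^{\imath j\theta}$, $b(\theta)=\sum_{j=0}^{\mathrm{k}}b_je^{\imath j\theta}$, $c(\theta)=\sum_{j=0}^{\mathrm{k}-1}c_je^{\imath j\theta}$, assume there exist positive finite constants $$\sigma_{\mathrm{F}}=\max_{\theta\in[0,2\pi)}\Big|\frac1{a(\theta)}\Big|,\quad\sigma_{\mathrm{E}}=\max_{\theta\in[0,2\pi)}\Big|\frac{c(\theta)}{a(\theta)}\Big|,\quad\lambda_{\mathrm{I}}=\min_{\theta\in[0,2\pi)}\Re\Big[\frac{b(\theta)}{a(\theta)}\Big].$$ Then for every $n\ge1$ the spectral norms of the $n\times n$ lower triangular Toeplitz matrices $A_L^{-1}$ and $A_L^{-1}C_L$ are bounded by $\sigma_{\mathrm{F}}$ and $\sigma_{\mathrm{E}}$, respectively, and all eigenvalues of $\frac12\big(A_L^{-1}B_L+(A_L^{-1}B_L)^T\big)$ are bounded below by $\lambda_{\mathrm{I}}$. Moreover, for any real sequences $\{v^i\}_{i\ge1}$, $\{u^i\}_{i\ge1}$ and every $n\ge1$: (i) $\sum_{i=1}^n\sum_{j=1}^i\hat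 b_{i-j}v^jv^i\ge\lambda_{\mathrm{I}}\sum_{i=1}^n|v^i|^2$; (ii) $\sum_{i=1}^n\sum_{j=1}^i a^{(-1)}_{i-j}v^ju^i\le\sigma_{\mathrm{F}}\sqrt{\sum_{i=1}^n|v^i|^2}\sqrt{\sum_{i=1}^n|u^i|^2}$; (iii) $\sum_{i=1}^n\sum_{j=1}^i\hat c_{i-j}v^ju^i\le\sigma_{\mathrm{E}}\sqrt{\sum_{i=1}^n|v^i|^2}\sqrt{\sum_{i=1}^n|u^i|^2}$.
   Context: $A_L$, $B_L$, $C_L$ denote the $n\times n$ lower triangular Toeplitz matrices with $(i,j)$ entry $a_{i-j}$, $b_{i-j}$, $c_{i-j}$ respectively for $i\ge j$ (zero above the diagonal). The DOC kernels $a^{(-1)}_j$ are defined by $a^{(-1)}_0=1/a_0$ and $a^{(-1)}_j=-\frac1{a_0}\sum_{i=1}^ja^{(-1)}_{j-i}a_i$ for $j\ge1$ (so that the lower triangular Toeplitz matrix with entries $a^{(-1)}_{i-j}$ is $A_L^{-1}$). The composite kernels are $\hat b_j=\sum_{i=0}^ja^{(-1)}_{j-i}b_i$ and $\hat c_j=\sum_{i=0}^ja^{(-1)}_{j-i}c_i$ for $j\ge0$. Zero-stability: each of $(\zeta-1)\sum_{j=0}^{\mathrm{k}-1}a_j\zeta^{\mathrm{k}-j-1}$, $\sum_{j=0}^{\mathrm{k}}b_j\zeta^{\mathrm{k}-j}$, $\sum_{j=0}^{\mathrm{k}-1}c_j\zeta^{\mathrm{k}-j-1}$ has all roots in the closed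 unit disk with those on the unit circle simple. *)

theory Defs
  imports "HOL-Computational_Algebra.Polynomial" "Jordan_Normal_Form.Char_Poly"
begin

definition toeplitz_L :: "nat \<Rightarrow> (nat \<Rightarrow> real) \<Rightarrow> real mat" where
  "toeplitz_L n a = mat n n (\<lambda>(i, j). if j \<le> i then a (i - j) else 0)"

definition vnorm2 :: "real vec \<Rightarrow> real" where
  "vnorm2 x = sqrt (x \<bullet> x)"

definition spectral_norm :: "real mat \<Rightarrow> real" where
  "spectral_norm M = (SUP x \<in> {x \<in> carrier_vec (dim_col M). vnorm2 x = 1}. vnorm2 (M *\<^sub>v x))"

fun doc :: "(nat \<Rightarrow> real) \<Rightarrow> nat \<Rightarrow> real" where
  "doc a j = (if j = 0 then 1 / a 0
              else - (1 / a 0) * (\<Sum>i\<in>{1..j}. doc a (j - i) * a i))"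

definition hat_kernel :: "(nat \<Rightarrow> real) \<Rightarrow> (nat \<Rightarrow> real) \<Rightarrow> nat \<Rightarrow> real" where
  "hat_kernel a b j = (\<Sum>i=0..j. doc a (j - i) * b i)"

definition rho_poly :: "nat \<Rightarrow> (nat \<Rightarrow> real) \<Rightarrow> complex poly" where
  "rho_poly k a = [:-1, 1:] * (\<Sum>j<k. monom (complex_of_real (a j)) (k - j - 1))"

definition sigma_poly :: "nat \<Rightarrow> (nat \<Rightarrow> real) \<Rightarrow> complex poly" where
  "sigma_poly k b = (\<Sum>j\<le>k. monom (complex_of_real (b j)) (k - j))"

definition gamma_poly :: "nat \<Rightarrow> (nat \<Rightarrow> real) \<Rightarrow> complex poly" where
  "gamma_poly k c = (\<Sum>j<k. monom (complex_of_real (c j)) (k - j - 1))"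

definition root_condition :: "complex poly \<Rightarrow> bool" where
  "root_condition p \<longleftrightarrow> (\<forall>z. poly p z = 0 \<longrightarrow> cmod z \<le> 1 \<and> (cmod z = 1 \<longrightarrow> order z p = 1))"

definition zero_stable :: "nat \<Rightarrow> (nat \<Rightarrow> real) \<Rightarrow> (nat \<Rightarrow> real) \<Rightarrow> (nat \<Rightarrow> real) \<Rightarrow> bool" where
  "zero_stable k a b c \<longleftrightarrow>
     root_condition (rho_poly k a) \<and> root_condition (sigma_poly k b) \<and> root_condition (gamma_poly k c)"

definition symb :: "nat \<Rightarrow> (nat \<Rightarrow> real) \<Rightarrow> real \<Rightarrow> complex" where
  "symb m a \<theta> = (\<Sum>j<m. complex_of_real (a j) * exp (\<i> * of_nat j * complex_of_real \<theta>))"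

end

theory Submission
  imports Defs "HOL-Complex_Analysis.Cauchy_Integral_Formula"
begin


definition ee :: "int \<Rightarrow> real \<Rightarrow> complex" where
  "ee k x = exp (\<i> * of_int k * of_real x)"

lemma ee_add: "ee k x * ee l x = ee (k + l) x"
  by (simp add: ee_def exp_add[symmetric] algebra_simps)

lemma orth:
  fixes N :: nat and k :: int
  assumes N: "0 < N" and kN: "\<bar>k\<bar> < int N"
  shows "(\<Sum>t<N. ee k (2 * pi * real t / real N)) = (if k = 0 then of_nat N else 0)"
proof -
  define q where "q = exp (\<i> * of_int k * of_real (2 * pi / real N))"
  have e: "ee k (2 * pi * real t / real N) = q ^ t" for t
  proof -
    have "ee k (2 * pi * real t / real N) = exp (of_nat t * (\<i> * of_int k * of_real (2 * pi / real N)))"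
      unfolding ee_def by (simp add: algebra_simps)
    also have "\<dots> = q ^ t" unfolding q_def by (rule exp_of_nat_mult)
    finally show ?thesis .
  qed
  have qN: "q ^ N = 1"
  proof -
    have "q ^ N = exp (of_nat N * (\<i> * of_int k * of_real (2 * pi / real N)))"
      unfolding q_def by (rule exp_of_nat_mult[symmetric])
    also have "of_nat N * (\<i> * of_int k * of_real (2 * pi / real N)) = \<i> * of_real (real_of_int (2 * k) * pi)"
      using N by (simp add: field_simps)
    also have "exp \<dots> = 1" by (subst exp_eq_1) auto
    finally show ?thesis .
  qed
  show ?thesis
  proof (cases "k = 0")
    case True
    then show ?thesis by (simp add: ee_def)
  next
    case False
    have "q \<noteq> 1"
    proof
      assume "q = 1"
      then obtain m :: int where m: "Im (\<i> * of_int k * of_real (2 * pi / real N)) = real_of_int (2 * m) * pi"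
        unfolding q_def exp_eq_1 by blast
      hence "real_of_int k * (2 * pi / real N) = real_of_int (2 * m) * pi" by simp
      hence "real_of_int k = real_of_int m * real N" using N by (simp add: field_simps)
      hence km: "k = m * int N" by (metis of_int_eq_iff of_int_mult of_int_of_nat_eq)
      show False
      proof (cases "m = 0")
        case True thus False using km False by simp
      next
        case mF: False
        have "\<bar>k\<bar> = \<bar>m\<bar> * int N" using km by (simp add: abs_mult)
        also have "\<dots> \<ge> 1 * int N" using mF by (intro mult_right_mono) auto
        finally show False using kN by simp
      qed
    qed
    then show ?thesis using False qN by (simp add: e sum_gp_strict)
  qed
qed


lemma triple:
  "(\<Sum>m\<in>A. f m) * (\<Sum>j\<in>B. g j) * (\<Sum>i\<in>C. h i) = (\<Sum>m\<in>A. \<Sum>j\<in>B. \<Sum>i\<in>C. f m * g j * (h i :: 'a :: comm_semiring_1))"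
proof -
  have "(\<Sum>m\<in>A. f m) * (\<Sum>j\<in>B. g j) = (\<Sum>m\<in>A. \<Sum>j\<in>B. f m * g j)" by (rule sum_product)
  hence "(\<Sum>m\<in>A. f m) * (\<Sum>j\<in>B. g j) * (\<Sum>i\<in>C. h i) = (\<Sum>m\<in>A. \<Sum>j\<in>B. f m * g j) * (\<Sum>i\<in>C. h i)" by simp
  also have "\<dots> = (\<Sum>m\<in>A. (\<Sum>j\<in>B. f m * g j) * (\<Sum>i\<in>C. h i))" by (rule sum_distrib_right)
  also have "\<dots> = (\<Sum>m\<in>A. \<Sum>j\<in>B. \<Sum>i\<in>C. f m * g j * h i)" by (rule sum.cong[OF refl]) (rule sum_product)
  finally show ?thesis .
qed

lemma reindex_delta:
  fixes X :: "nat \<Rightarrow> nat \<Rightarrow> nat \<Rightarrow> complex"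
  assumes "n \<le> M"
  shows "(\<Sum>m<M. \<Sum>j<n. \<Sum>i<n. (if m + j = i then X m j i else 0))
       = (\<Sum>i<n. \<Sum>j\<le>i. X (i - j) j i)"
proof -
  have "(\<Sum>m<M. \<Sum>j<n. \<Sum>i<n. (if m + j = i then X m j i else 0))
      = (\<Sum>i<n. \<Sum>j<n. \<Sum>m<M. (if m + j = i then X m j i else 0))"
    by (subst sum.swap) (subst (2) sum.swap, subst sum.swap, rule refl)
  also have "\<dots> = (\<Sum>i<n. \<Sum>j<n. (if j \<le> i then X (i - j) j i else 0))"
  proof (intro sum.cong refl)
    fix i j assume i: "i \<in> {..<n}" and j: "j \<in> {..<n}"
    have "(\<Sum>m<M. (if m + j = i then X m j i else 0)) = (\<Sum>m<M. (if m = i - j \<and> j \<le> i then X (i - j) j i else 0))"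
      by (intro sum.cong refl) auto
    also have "\<dots> = (if j \<le> i then X (i - j) j i else 0)"
      using i assms by (cases "j \<le> i") auto
    finally show "(\<Sum>m<M. (if m + j = i then X m j i else 0)) = (if j \<le> i then X (i - j) j i else 0)" .
  qed
  also have "\<dots> = (\<Sum>i<n. \<Sum>j\<le>i. X (i - j) j i)"
  proof (rule sum.cong[OF refl])
    fix i assume i: "i \<in> {..<n}"
    have "(\<Sum>j<n. (if j \<le> i then X (i - j) j i else 0)) = (\<Sum>j\<in>{j\<in>{..<n}. j \<le> i}. X (i - j) j i)"
      by (rule sum.inter_filter[symmetric]) simp
    moreover have "{j\<in>{..<n}. j \<le> i} = {..i}" using i by auto
    ultimately show "(\<Sum>j<n. (if j \<le> i then X (i - j) j i else 0)) = (\<Sum>j\<le>i. X (i - j) j i)" by simp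
  qed
  finally show ?thesis .
qed

lemma ident:
  fixes g v u :: "nat \<Rightarrow> real" and M n N :: nat
  assumes NMn: "M + n \<le> N" and nM: "n \<le> M" and N: "0 < N"
  shows "(\<Sum>t<N. (\<Sum>m<M. of_real (g m) * ee (int m) (2 * pi * real t / real N))
               * (\<Sum>j<n. of_real (v j) * ee (int j) (2 * pi * real t / real N))
               * (\<Sum>i<n. of_real (u i) * ee (- int i) (2 * pi * real t / real N)))
       = of_nat N * of_real (\<Sum>i<n. \<Sum>j\<le>i. g (i - j) * v j * u i)"
proof -
  define th where "th t = 2 * pi * real t / real N" for t
  have "(\<Sum>t<N. (\<Sum>m<M. of_real (g m) * ee (int m) (th t))
               * (\<Sum>j<n. of_real (v j) * ee (int j) (th t))
               * (\<Sum>i<n. of_real (u i) * ee (- int i) (th t)))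
      = (\<Sum>t<N. \<Sum>m<M. \<Sum>j<n. \<Sum>i<n. of_real (g m * v j * u i) * ee (int m + int j - int i) (th t))"
  proof (intro sum.cong refl)
    fix t
    have "(\<Sum>m<M. of_real (g m) * ee (int m) (th t))
               * (\<Sum>j<n. of_real (v j) * ee (int j) (th t))
               * (\<Sum>i<n. of_real (u i) * ee (- int i) (th t))
        = (\<Sum>m<M. \<Sum>j<n. \<Sum>i<n. (of_real (g m) * ee (int m) (th t)) * (of_real (v j) * ee (int j) (th t))
                * (of_real (u i) * ee (- int i) (th t)))"
      by (rule triple)
    also have "\<dots> = (\<Sum>m<M. \<Sum>j<n. \<Sum>i<n. of_real (g m * v j * u i) * ee (int m + int j - int i) (th t))"
    proof (intro sum.cong refl)
      fix m j i
      have "ee (int m + int j - int i) (th t) = ee (int m) (th t) * ee (int j) (th t) * ee (- int i) (th t)"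
        by (simp add: ee_add)
      thus "(of_real (g m) * ee (int m) (th t)) * (of_real (v j) * ee (int j) (th t))
                * (of_real (u i) * ee (- int i) (th t)) = of_real (g m * v j * u i) * ee (int m + int j - int i) (th t)"
        by (simp add: algebra_simps)
    qed
    finally show "(\<Sum>m<M. of_real (g m) * ee (int m) (th t))
               * (\<Sum>j<n. of_real (v j) * ee (int j) (th t))
               * (\<Sum>i<n. of_real (u i) * ee (- int i) (th t))
        = (\<Sum>m<M. \<Sum>j<n. \<Sum>i<n. of_real (g m * v j * u i) * ee (int m + int j - int i) (th t))" .
  qed
  also have "\<dots> = (\<Sum>m<M. \<Sum>j<n. \<Sum>i<n. of_real (g m * v j * u i) * (\<Sum>t<N. ee (int m + int j - int i) (th t)))"
    by (simp add: sum_distrib_left sum.swap[of _ "{..<N}"])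
  also have "\<dots> = (\<Sum>m<M. \<Sum>j<n. \<Sum>i<n. (if m + j = i then of_nat N * of_real (g m * v j * u i) else 0))"
  proof (intro sum.cong refl)
    fix m j i assume "m \<in> {..<M}" "j \<in> {..<n}" "i \<in> {..<n}"
    hence "\<bar>int m + int j - int i\<bar> < int N" using NMn by auto
    thus "of_real (g m * v j * u i) * (\<Sum>t<N. ee (int m + int j - int i) (th t)) =
          (if m + j = i then of_nat N * of_real (g m * v j * u i) else 0)"
      using orth[OF N, of "int m + int j - int i"] unfolding th_def by auto
  qed
  also have "\<dots> = (\<Sum>i<n. \<Sum>j\<le>i. of_nat N * of_real (g (i - j) * v j * u i))"
    by (rule reindex_delta[OF nM])
  also have "\<dots> = of_nat N * of_real (\<Sum>i<n. \<Sum>j\<le>i. g (i - j) * v j * u i)"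
    by (simp add: sum_distrib_left)
  finally show ?thesis unfolding th_def .
qed


lemma symb_ee: "symb M g x = (\<Sum>m<M. of_real (g m) * ee (int m) x)"
  unfolding symb_def ee_def by simp

lemma cnj_symb: "cnj (symb M g x) = (\<Sum>m<M. of_real (g m) * ee (- int m) x)"
  unfolding symb_def ee_def by (simp add: exp_cnj)

abbreviation th :: "nat \<Rightarrow> nat \<Rightarrow> real" where
  "th N t \<equiv> 2 * pi * real t / real N"

lemma ident2:
  fixes g v u :: "nat \<Rightarrow> real" and M n N :: nat
  assumes NMn: "M + n \<le> N" and nM: "n \<le> M" and N: "0 < N"
  shows "(\<Sum>t<N. symb M g (th N t) * symb n v (th N t) * cnj (symb n u (th N t)))
       = of_nat N * of_real (\<Sum>i<n. \<Sum>j\<le>i. g (i - j) * v j * u i)"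
  unfolding cnj_symb unfolding symb_ee by (rule ident[OF assms])

lemma parseval:
  fixes v :: "nat \<Rightarrow> real" and n N :: nat
  assumes "2 * n \<le> N" and N: "0 < N"
  shows "(\<Sum>t<N. (cmod (symb n v (th N t)))^2) = real N * (\<Sum>i<n. (v i)^2)"
proof (cases "n = 0")
  case True thus ?thesis by (simp add: symb_def)
next
  case False
  define d :: "nat \<Rightarrow> real" where "d m = (if m = 0 then 1 else 0)" for m
  have sd: "symb n d x = 1" for x
  proof -
    have "symb n d x = (\<Sum>m\<in>{0}. of_real (d m) * exp (\<i> * of_nat m * of_real x))"
      unfolding symb_def using False by (intro sum.mono_neutral_right) (auto simp: d_def)
    thus ?thesis by (simp add: d_def)
  qed
  have "complex_of_real (\<Sum>t<N. (cmod (symb n v (th N t)))^2)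
     = (\<Sum>t<N. symb n d (th N t) * symb n v (th N t) * cnj (symb n v (th N t)))"
    unfolding of_real_sum by (intro sum.cong refl) (simp add: sd complex_norm_square[symmetric])
  also have "\<dots> = of_nat N * of_real (\<Sum>i<n. \<Sum>j\<le>i. d (i - j) * v j * v i)"
    using assms by (intro ident2) auto
  also have "(\<Sum>i<n. \<Sum>j\<le>i. d (i - j) * v j * v i) = (\<Sum>i<n. (v i)^2)"
  proof (rule sum.cong[OF refl])
    fix i
    have "(\<Sum>j\<le>i. d (i - j) * v j * v i) = (\<Sum>j\<in>{i}. d (i - j) * v j * v i)"
      by (intro sum.mono_neutral_right) (auto simp: d_def)
    thus "(\<Sum>j\<le>i. d (i - j) * v j * v i) = (v i)^2" by (simp add: d_def power2_eq_square)
  qed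
  finally have "complex_of_real (\<Sum>t<N. (cmod (symb n v (th N t)))^2) = complex_of_real (real N * (\<Sum>i<n. (v i)^2))"
    by simp
  thus ?thesis using of_real_eq_iff by blast
qed

lemma bil_bound:
  fixes g v u :: "nat \<Rightarrow> real" and M n N :: nat
  assumes NMn: "M + n \<le> N" and nM: "n \<le> M" and N: "0 < N"
    and S: "\<And>t. t < N \<Longrightarrow> cmod (symb M g (th N t)) \<le> S"
  shows "(\<Sum>i<n. \<Sum>j\<le>i. g (i - j) * v j * u i) \<le> S * sqrt (\<Sum>i<n. (v i)^2) * sqrt (\<Sum>i<n. (u i)^2)"
proof -
  define B where "B = (\<Sum>i<n. \<Sum>j\<le>i. g (i - j) * v j * u i)"
  define V where "V t = cmod (symb n v (th N t))" for t
  define U where "U t = cmod (symb n u (th N t))" for t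
  have S0: "0 \<le> S" using S[of 0] N by (meson norm_ge_zero order_trans)
  have "real N * B = Re (of_nat N * of_real B)" by simp
  also have "\<dots> = Re (\<Sum>t<N. symb M g (th N t) * symb n v (th N t) * cnj (symb n u (th N t)))"
    unfolding B_def using assms by (subst ident2) auto
  also have "\<dots> \<le> cmod (\<Sum>t<N. symb M g (th N t) * symb n v (th N t) * cnj (symb n u (th N t)))"
    by (rule complex_Re_le_cmod)
  also have "\<dots> \<le> (\<Sum>t<N. cmod (symb M g (th N t) * symb n v (th N t) * cnj (symb n u (th N t))))"
    by (rule norm_sum)
  also have "\<dots> \<le> (\<Sum>t<N. S * (V t * U t))"
  proof (rule sum_mono)
    fix t assume "t \<in> {..<N}"
    hence "cmod (symb M g (th N t)) \<le> S" using S by auto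
    thus "cmod (symb M g (th N t) * symb n v (th N t) * cnj (symb n u (th N t))) \<le> S * (V t * U t)"
      unfolding V_def U_def by (simp add: norm_mult mult.assoc mult_right_mono)
  qed
  also have "\<dots> = S * (\<Sum>t<N. V t * U t)" by (simp add: sum_distrib_left)
  also have "(\<Sum>t<N. V t * U t) \<le> sqrt (\<Sum>t<N. (V t)^2) * sqrt (\<Sum>t<N. (U t)^2)"
  proof -
    have "(\<Sum>t<N. V t * U t)^2 \<le> (\<Sum>t<N. (V t)^2) * (\<Sum>t<N. (U t)^2)"
      by (rule Cauchy_Schwarz_ineq_sum)
    hence "(\<Sum>t<N. V t * U t) \<le> sqrt ((\<Sum>t<N. (V t)^2) * (\<Sum>t<N. (U t)^2))"
      by (rule real_le_rsqrt)
    thus ?thesis by (simp add: real_sqrt_mult)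
  qed
  hence "S * (\<Sum>t<N. V t * U t) \<le> S * (sqrt (\<Sum>t<N. (V t)^2) * sqrt (\<Sum>t<N. (U t)^2))"
    using S0 by (rule mult_left_mono)
  also have "(\<Sum>t<N. (V t)^2) = real N * (\<Sum>i<n. (v i)^2)"
    unfolding V_def using assms by (intro parseval) auto
  also have "(\<Sum>t<N. (U t)^2) = real N * (\<Sum>i<n. (u i)^2)"
    unfolding U_def using assms by (intro parseval) auto
  also have "S * (sqrt (real N * (\<Sum>i<n. (v i)^2)) * sqrt (real N * (\<Sum>i<n. (u i)^2)))
      = real N * (S * sqrt (\<Sum>i<n. (v i)^2) * sqrt (\<Sum>i<n. (u i)^2))"
    by (simp add: real_sqrt_mult real_sqrt_mult_self algebra_simps)
  finally have "real N * B \<le> real N * (S * sqrt (\<Sum>i<n. (v i)^2) * sqrt (\<Sum>i<n. (u i)^2))" .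
  thus ?thesis unfolding B_def using N by simp
qed

lemma re_bound:
  fixes g v :: "nat \<Rightarrow> real" and M n N :: nat
  assumes NMn: "M + n \<le> N" and nM: "n \<le> M" and N: "0 < N"
    and L: "\<And>t. t < N \<Longrightarrow> L \<le> Re (symb M g (th N t))"
  shows "L * (\<Sum>i<n. (v i)^2) \<le> (\<Sum>i<n. \<Sum>j\<le>i. g (i - j) * v j * v i)"
proof -
  define B where "B = (\<Sum>i<n. \<Sum>j\<le>i. g (i - j) * v j * v i)"
  define V where "V t = cmod (symb n v (th N t))" for t
  have "real N * (L * (\<Sum>i<n. (v i)^2)) = L * (\<Sum>t<N. (V t)^2)"
    unfolding V_def using assms by (subst parseval) auto
  also have "\<dots> = (\<Sum>t<N. L * (V t)^2)" by (simp add: sum_distrib_left)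
  also have "\<dots> \<le> (\<Sum>t<N. Re (symb M g (th N t)) * (V t)^2)"
    using L by (intro sum_mono mult_right_mono) auto
  also have "\<dots> = Re (\<Sum>t<N. symb M g (th N t) * symb n v (th N t) * cnj (symb n v (th N t)))"
    unfolding V_def Re_sum by (intro sum.cong refl) (simp add: mult.assoc complex_norm_square[symmetric])
  also have "\<dots> = Re (of_nat N * of_real B)"
    unfolding B_def using assms by (subst ident2) auto
  also have "\<dots> = real N * B" by simp
  finally show ?thesis unfolding B_def using N by simp
qed



declare doc.simps[simp del]

definition pol :: "nat \<Rightarrow> (nat \<Rightarrow> real) \<Rightarrow> complex poly" where
  "pol k a = (\<Sum>j<k. monom (complex_of_real (a j)) j)"

lemma coeff_pol: "coeff (pol k a) i = (if i < k then complex_of_real (a i) else 0)"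
  unfolding pol_def coeff_sum coeff_monom by (simp add: sum.delta)

lemma coeff_pol': "(\<And>j. j \<ge> k \<Longrightarrow> a j = 0) \<Longrightarrow> coeff (pol k a) i = complex_of_real (a i)"
  by (simp add: coeff_pol)

lemma exp_pow: "exp (\<i> * of_real x) ^ j = exp (\<i> * of_nat j * of_real x)"
proof -
  have "exp (\<i> * of_real x) ^ j = exp (of_nat j * (\<i> * of_real x))" by (rule exp_of_nat_mult[symmetric])
  thus ?thesis by (simp add: algebra_simps)
qed

lemma symb_poly: "symb k a x = poly (pol k a) (exp (\<i> * of_real x))"
  unfolding symb_def pol_def poly_sum poly_monom exp_pow by simp

lemma inv_nth:
  assumes a0: "a 0 \<noteq> 0" and ext: "\<And>j. j \<ge> k \<Longrightarrow> a j = 0"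
  shows "fps_nth (inverse (fps_of_poly (pol k a))) n = complex_of_real (doc a n)"
proof (induction n rule: less_induct)
  case (less n)
  define f where "f = fps_of_poly (pol k a)"
  have fi: "fps_nth f i = complex_of_real (a i)" for i unfolding f_def using ext by (simp add: coeff_pol')
  show ?case
  proof (cases "n = 0")
    case True
    have "doc a 0 = 1 / a 0" by (subst doc.simps) simp
    have "fps_nth (inverse f) 0 = inverse (fps_nth f 0)" by (rule fps_inverse_nth_0)
    also have "\<dots> = complex_of_real (doc a 0)" unfolding fi \<open>doc a 0 = 1 / a 0\<close>
      by (simp add: of_real_inverse[symmetric] divide_inverse del: of_real_inverse)
    finally show ?thesis using True unfolding f_def by simp
  next
    case False
    have "fps_nth (inverse f) n = - inverse (fps_nth f 0) * (\<Sum>i=1..n. fps_nth f i * fps_nth (inverse f) (n - i))"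
      unfolding fps_inverse_def using False by (simp add: fps_right_inverse_constructor_rec)
    also have "\<dots> = - inverse (complex_of_real (a 0)) * (\<Sum>i=1..n. complex_of_real (a i) * complex_of_real (doc a (n - i)))"
      using less.IH False unfolding fi by (intro arg_cong2[where f="(*)"] refl sum.cong) (auto simp: f_def)
    also have "\<dots> = complex_of_real (doc a n)"
    proof -
      have "doc a n = - (1 / a 0) * (\<Sum>i\<in>{1..n}. doc a (n - i) * a i)"
        using False by (subst doc.simps) simp
      thus ?thesis by (simp add: mult.commute divide_inverse)
    qed
    finally show ?thesis unfolding f_def .
  qed
qed


lemma hat_conv: "hat_kernel a p m = (\<Sum>i=0..m. doc a i * p (m - i))"
  unfolding hat_kernel_def
  using sum.atLeastAtMost_rev[of "\<lambda>i. doc a (m - i) * p i" 0 m] by simp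

lemma series_symb:
  fixes a p :: "nat \<Rightarrow> real" and k K :: nat
  assumes a0: "a 0 \<noteq> 0" and a_ext: "\<And>j. j \<ge> k \<Longrightarrow> a j = 0"
    and p_ext: "\<And>j. j \<ge> K \<Longrightarrow> p j = 0"
    and nz: "\<And>z. cmod z \<le> 1 \<Longrightarrow> poly (pol k a) z \<noteq> 0"
  shows "summable (\<lambda>m. \<bar>hat_kernel a p m\<bar>)"
    and "\<And>x. (\<lambda>m. complex_of_real (hat_kernel a p m) * exp (\<i> * of_nat m * of_real x))
               sums (symb K p x / symb k a x)"
proof -
  have "k > 0" using a0 a_ext by (cases k) auto
  hence pne: "pol k a \<noteq> 0" using a0 by (metis coeff_0 coeff_pol of_real_eq_0_iff)
  define Z where "Z = {z. poly (pol k a) z = 0}"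
  have finZ: "finite Z" unfolding Z_def using pne by (rule poly_roots_finite)
  define R where "R = Min (insert 2 (cmod ` Z))"
  have Zgt: "cmod z > 1" if "z \<in> Z" for z using nz[of z] that unfolding Z_def by force
  have R1: "R > 1" unfolding R_def using finZ Zgt by auto
  have Rnz: "poly (pol k a) z \<noteq> 0" if "cmod z < R" for z
  proof
    assume "poly (pol k a) z = 0"
    hence "z \<in> Z" unfolding Z_def by simp
    hence "R \<le> cmod z" unfolding R_def using finZ by (intro Min_le) auto
    thus False using that by simp
  qed
  define fA where "fA = fps_of_poly (pol k a)"
  define fP where "fP = fps_of_poly (pol K p)"
  define H where "H = inverse fA * fP"
  have rinv: "ereal R \<le> fps_conv_radius (inverse fA)"
  proof -
    have "min (ereal R) (fps_conv_radius fA) \<le> fps_conv_radius (inverse fA)"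
      by (rule fps_conv_radius_inverse) (use Rnz in \<open>auto simp: fA_def\<close>)
    thus ?thesis by (simp add: fA_def)
  qed
  have einv: "eval_fps (inverse fA) z = inverse (poly (pol k a) z)" if "cmod z < R" for z
  proof -
    have "eval_fps (inverse fA) z = inverse (eval_fps fA z)"
      by (rule eval_fps_inverse[where r = "ereal R"]) (use Rnz that in \<open>auto simp: fA_def\<close>)
    thus ?thesis by (simp add: fA_def)
  qed
  have rH: "ereal R \<le> fps_conv_radius H"
  proof -
    have "min (fps_conv_radius (inverse fA)) (fps_conv_radius fP) \<le> fps_conv_radius H"
      unfolding H_def by (rule fps_conv_radius_mult)
    thus ?thesis using rinv by (simp add: fP_def)
  qed
  have eH: "eval_fps H z = inverse (poly (pol k a) z) * poly (pol K p) z" if "cmod z < R" for z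
  proof -
    have "eval_fps H z = eval_fps (inverse fA) z * eval_fps fP z"
      unfolding H_def
    proof (rule eval_fps_mult)
      have "ereal (norm z) < ereal R" using that by simp
      thus "ereal (norm z) < fps_conv_radius (inverse fA)" using rinv by (rule less_le_trans)
    qed (simp add: fP_def)
    thus ?thesis using einv[OF that] by (simp add: fP_def)
  qed
  have cH: "fps_nth H m = complex_of_real (hat_kernel a p m)" for m
  proof -
    have "fps_nth H m = (\<Sum>i=0..m. fps_nth (inverse fA) i * fps_nth fP (m - i))"
      unfolding H_def by (rule fps_mult_nth)
    also have "\<dots> = (\<Sum>i=0..m. complex_of_real (doc a i) * complex_of_real (p (m - i)))"
      unfolding fA_def fP_def using inv_nth[of a k, OF a0 a_ext] coeff_pol'[of K p, OF p_ext] by simp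
    also have "\<dots> = complex_of_real (hat_kernel a p m)" unfolding hat_conv by simp
    finally show ?thesis .
  qed
  have "ereal (norm (1::complex)) < ereal R" using R1 by simp
  hence lt1: "ereal (norm (1::complex)) < fps_conv_radius H" using rH by (rule less_le_trans)
  from norm_summable_fps[OF lt1] show "summable (\<lambda>m. \<bar>hat_kernel a p m\<bar>)"
    by (simp add: cH)
  fix x
  define z where "z = exp (\<i> * of_real x)"
  have nz1: "norm z = 1" unfolding z_def by simp
  have ltz: "ereal (norm z) < fps_conv_radius H" using lt1 nz1 by simp
  have "(\<lambda>n. fps_nth H n * z ^ n) sums eval_fps H z" by (rule sums_eval_fps[OF ltz])
  moreover have "eval_fps H z = symb K p x / symb k a x"
    using eH[of z] nz1 R1 by (simp add: symb_poly z_def divide_inverse mult.commute)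
  ultimately show "(\<lambda>m. complex_of_real (hat_kernel a p m) * exp (\<i> * of_nat m * of_real x))
               sums (symb K p x / symb k a x)"
    by (simp add: cH z_def exp_pow)
qed



lemma tail_bound:
  fixes F :: "nat \<Rightarrow> real"
  assumes sF: "summable (\<lambda>m. \<bar>F m\<bar>)"
    and sums: "(\<lambda>m. complex_of_real (F m) * exp (\<i> * of_nat m * of_real x)) sums P"
  shows "cmod (P - symb M F x) \<le> (\<Sum>m. \<bar>F (m + M)\<bar>)"
proof -
  define f where "f m = complex_of_real (F m) * exp (\<i> * of_nat m * of_real x)" for m
  have nf: "norm (f m) = \<bar>F m\<bar>" for m unfolding f_def by (simp add: norm_mult)
  have "(\<lambda>m. f (m + M)) sums (P - (\<Sum>i<M. f i))"
    using sums_split_initial_segment[OF sums[folded f_def]] .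
  moreover have "(\<Sum>i<M. f i) = symb M F x" unfolding f_def symb_def by simp
  ultimately have "(\<lambda>m. f (m + M)) sums (P - symb M F x)" by simp
  hence eq: "P - symb M F x = (\<Sum>m. f (m + M))" by (simp add: sums_iff)
  have sn: "summable (\<lambda>m. norm (f (m + M)))" unfolding nf
    using summable_ignore_initial_segment[OF sF] .
  have "norm (\<Sum>m. f (m + M)) \<le> (\<Sum>m. norm (f (m + M)))" by (rule summable_norm[OF sn])
  thus ?thesis unfolding eq nf .
qed

lemma tail_small:
  fixes F :: "nat \<Rightarrow> real"
  assumes sF: "summable (\<lambda>m. \<bar>F m\<bar>)" and e: "e > 0"
  shows "\<exists>M0. \<forall>M\<ge>M0. (\<Sum>m. \<bar>F (m + M)\<bar>) < e"
proof -
  obtain M0 where "\<forall>M\<ge>M0. norm (\<Sum>i. \<bar>F (i + M)\<bar>) < e"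
    using suminf_exist_split[OF e sF] by blast
  thus ?thesis by (intro exI[of _ M0]) (auto dest: order.strict_trans1[OF abs_ge_self])
qed

lemma th_range: "0 < N \<Longrightarrow> t < N \<Longrightarrow> 0 \<le> th N t \<and> th N t < 2 * pi"
  by (auto simp: field_simps)

lemma lim_bil:
  fixes F v u :: "nat \<Rightarrow> real" and S :: real and n :: nat
  assumes sF: "summable (\<lambda>m. \<bar>F m\<bar>)"
    and sums: "\<And>x. (\<lambda>m. complex_of_real (F m) * exp (\<i> * of_nat m * of_real x)) sums P x"
    and bnd: "\<And>x. 0 \<le> x \<Longrightarrow> x < 2 * pi \<Longrightarrow> cmod (P x) \<le> S"
  shows "(\<Sum>i<n. \<Sum>j\<le>i. F (i - j) * v j * u i) \<le> S * sqrt (\<Sum>i<n. (v i)^2) * sqrt (\<Sum>i<n. (u i)^2)"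
proof -
  define B where "B = (\<Sum>i<n. \<Sum>j\<le>i. F (i - j) * v j * u i)"
  define W where "W = sqrt (\<Sum>i<n. (v i)^2) * sqrt (\<Sum>i<n. (u i)^2)"
  have W0: "W \<ge> 0" unfolding W_def by (intro mult_nonneg_nonneg real_sqrt_ge_zero sum_nonneg) auto
  define T where "T M = (\<Sum>m. \<bar>F (m + M)\<bar>)" for M
  have T0: "T M \<ge> 0" for M unfolding T_def
    by (intro suminf_nonneg summable_ignore_initial_segment[OF sF]) auto
  have key: "B \<le> (S + T M) * W" if M: "M \<ge> n" "M \<ge> 1" for M
  proof -
    have "B \<le> (S + T M) * sqrt (\<Sum>i<n. (v i)^2) * sqrt (\<Sum>i<n. (u i)^2)"
      unfolding B_def
    proof (rule bil_bound[where N = "M + n"])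
      fix t assume t: "t < M + n"
      have r: "0 \<le> th (M + n) t \<and> th (M + n) t < 2 * pi" using th_range[of "M + n" t] t M by simp
      have "cmod (symb M F (th (M + n) t)) \<le> cmod (P (th (M + n) t)) + cmod (P (th (M + n) t) - symb M F (th (M + n) t))"
        by (metis add_diff_cancel_left' diff_add_cancel norm_triangle_ineq4)
      also have "\<dots> \<le> S + T M"
        using bnd[of "th (M + n) t"] r tail_bound[OF sF sums, of "th (M + n) t" M] unfolding T_def
        by (intro add_mono) auto
      finally show "cmod (symb M F (th (M + n) t)) \<le> S + T M" .
    qed (use M in auto)
    thus ?thesis unfolding W_def by (simp add: mult.assoc)
  qed
  have "B \<le> S * W + e" if e: "e > 0" for e
  proof -
    define \<epsilon> where "\<epsilon> = e / (W + 1)"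
    have eps: "\<epsilon> > 0" unfolding \<epsilon>_def using e W0 by simp
    obtain M0 where M0: "\<forall>M\<ge>M0. T M < \<epsilon>" using tail_small[OF sF eps] unfolding T_def by blast
    define M where "M = max M0 (max n 1)"
    have "B \<le> (S + T M) * W" using key[of M] unfolding M_def by simp
    also have "\<dots> = S * W + T M * W" by (simp add: algebra_simps)
    also have "T M * W \<le> \<epsilon> * W" using M0[rule_format, of M] W0 unfolding M_def by (intro mult_right_mono) auto
    also have "\<epsilon> * W \<le> e" unfolding \<epsilon>_def using W0 e by (simp add: field_simps)
    finally show ?thesis by simp
  qed
  hence "B \<le> S * W" by (rule field_le_epsilon)
  thus ?thesis unfolding B_def W_def by (simp add: mult.assoc)
qed

lemma lim_re:
  fixes F v :: "nat \<Rightarrow> real" and L :: real and n :: nat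
  assumes sF: "summable (\<lambda>m. \<bar>F m\<bar>)"
    and sums: "\<And>x. (\<lambda>m. complex_of_real (F m) * exp (\<i> * of_nat m * of_real x)) sums P x"
    and bnd: "\<And>x. 0 \<le> x \<Longrightarrow> x < 2 * pi \<Longrightarrow> L \<le> Re (P x)"
  shows "L * (\<Sum>i<n. (v i)^2) \<le> (\<Sum>i<n. \<Sum>j\<le>i. F (i - j) * v j * v i)"
proof -
  define B where "B = (\<Sum>i<n. \<Sum>j\<le>i. F (i - j) * v j * v i)"
  define W where "W = (\<Sum>i<n. (v i)^2)"
  have W0: "W \<ge> 0" unfolding W_def by (intro sum_nonneg) auto
  define T where "T M = (\<Sum>m. \<bar>F (m + M)\<bar>)" for M
  have key: "(L - T M) * W \<le> B" if M: "M \<ge> n" "M \<ge> 1" for M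
    unfolding B_def W_def
  proof (rule re_bound[where N = "M + n"])
    fix t assume t: "t < M + n"
    have r: "0 \<le> th (M + n) t \<and> th (M + n) t < 2 * pi" using th_range[of "M + n" t] t M by simp
    have "Re (P (th (M + n) t)) - Re (symb M F (th (M + n) t)) \<le> cmod (P (th (M + n) t) - symb M F (th (M + n) t))"
      by (metis minus_complex.sel(1) complex_Re_le_cmod)
    also have "\<dots> \<le> T M" using tail_bound[OF sF sums, of "th (M + n) t" M] unfolding T_def .
    finally show "L - T M \<le> Re (symb M F (th (M + n) t))" using bnd[of "th (M + n) t"] r by linarith
  qed (use M in auto)
  have "L * W \<le> B + e" if e: "e > 0" for e
  proof -
    define \<epsilon> where "\<epsilon> = e / (W + 1)"
    have eps: "\<epsilon> > 0" unfolding \<epsilon>_def using e W0 by simp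
    obtain M0 where M0: "\<forall>M\<ge>M0. T M < \<epsilon>" using tail_small[OF sF eps] unfolding T_def by blast
    define M where "M = max M0 (max n 1)"
    have "L * W = (L - T M) * W + T M * W" by (simp add: algebra_simps)
    also have "(L - T M) * W \<le> B" using key[of M] unfolding M_def by simp
    also have "T M * W \<le> \<epsilon> * W" using M0[rule_format, of M] W0 unfolding M_def by (intro mult_right_mono) auto
    also have "\<epsilon> * W \<le> e" unfolding \<epsilon>_def using W0 e by (simp add: field_simps)
    finally show ?thesis by simp
  qed
  hence "L * W \<le> B" by (rule field_le_epsilon)
  thus ?thesis unfolding B_def W_def .
qed



lemma toeplitz_carrier: "toeplitz_L n g \<in> carrier_mat n n"
  unfolding toeplitz_L_def by simp

lemma toeplitz_index: "i < n \<Longrightarrow> j < n \<Longrightarrow> toeplitz_L n g $$ (i, j) = (if j \<le> i then g (i - j) else 0)"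
  unfolding toeplitz_L_def by simp

lemma toeplitz_dims [simp]: "dim_row (toeplitz_L n g) = n" "dim_col (toeplitz_L n g) = n"
  unfolding toeplitz_L_def by simp_all

lemma toeplitz_mult:
  "toeplitz_L n g * toeplitz_L n h = toeplitz_L n (\<lambda>d. \<Sum>i=0..d. g (d - i) * h i)"
proof (rule eq_matI)
  fix i l assume i: "i < dim_row (toeplitz_L n (\<lambda>d. \<Sum>i=0..d. g (d - i) * h i))"
    and l: "l < dim_col (toeplitz_L n (\<lambda>d. \<Sum>i=0..d. g (d - i) * h i))"
  hence i: "i < n" and l: "l < n" by simp_all
  have "(toeplitz_L n g * toeplitz_L n h) $$ (i, l)
      = (\<Sum>j\<in>{0..<n}. (if j \<le> i then g (i - j) else 0) * (if l \<le> j then h (j - l) else 0))"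
    using i l by (simp add: scalar_prod_def toeplitz_index)
  also have "\<dots> = (\<Sum>j\<in>{0..<n}. (if l \<le> j \<and> j \<le> i then g (i - j) * h (j - l) else 0))"
    by (intro sum.cong refl) auto
  also have "\<dots> = (\<Sum>j\<in>{j\<in>{0..<n}. l \<le> j \<and> j \<le> i}. g (i - j) * h (j - l))"
    by (rule sum.inter_filter[symmetric]) simp
  also have "{j\<in>{0..<n}. l \<le> j \<and> j \<le> i} = {l..i}" using i by auto
  also have "(\<Sum>j\<in>{l..i}. g (i - j) * h (j - l)) = (if l \<le> i then (\<Sum>m=0..i-l. g (i - l - m) * h m) else 0)"
  proof (cases "l \<le> i")
    case True
    have "(\<Sum>j\<in>{l..i}. g (i - j) * h (j - l)) = (\<Sum>m\<in>{0..i-l}. g (i - (m + l)) * h (m + l - l))"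
      by (rule sum.reindex_bij_witness[where i = "\<lambda>m. m + l" and j = "\<lambda>j. j - l"]) (use True in auto)
    also have "\<dots> = (\<Sum>m=0..i-l. g (i - l - m) * h m)" by (intro sum.cong refl) (simp add: add.commute)
    finally show ?thesis using True by simp
  qed simp
  also have "\<dots> = toeplitz_L n (\<lambda>d. \<Sum>i=0..d. g (d - i) * h i) $$ (i, l)"
    using i l by (simp add: toeplitz_index)
  finally show "(toeplitz_L n g * toeplitz_L n h) $$ (i, l) = toeplitz_L n (\<lambda>d. \<Sum>i=0..d. g (d - i) * h i) $$ (i, l)" .
qed simp_all

lemma hat_self: "a 0 \<noteq> 0 \<Longrightarrow> hat_kernel a a d = (if d = 0 then 1 else 0)"
proof (cases "d = 0")
  case True
  assume "a 0 \<noteq> 0"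
  thus ?thesis using True unfolding hat_kernel_def by (subst doc.simps) simp
next
  case False
  assume a0: "a 0 \<noteq> 0"
  have "hat_kernel a a d = doc a d * a 0 + (\<Sum>i=1..d. doc a (d - i) * a i)"
    unfolding hat_kernel_def using False by (simp add: sum.atLeast_Suc_atMost)
  also have "doc a d = - (1 / a 0) * (\<Sum>i\<in>{1..d}. doc a (d - i) * a i)"
    using False by (subst doc.simps) simp
  finally show ?thesis using False a0 by simp
qed

lemma toeplitz_one: "toeplitz_L n (\<lambda>d. if d = 0 then 1 else 0) = 1\<^sub>m n"
  by (rule eq_matI) (auto simp: toeplitz_index)

lemma ainv_eq:
  assumes a0: "a 0 \<noteq> 0" and A: "Ainv \<in> carrier_mat n n" and inv: "Ainv * toeplitz_L n a = 1\<^sub>m n"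
  shows "Ainv = toeplitz_L n (doc a)"
proof -
  have r: "toeplitz_L n a * toeplitz_L n (doc a) = 1\<^sub>m n"
  proof -
    have "toeplitz_L n a * toeplitz_L n (doc a) = toeplitz_L n (hat_kernel a a)"
      unfolding toeplitz_mult hat_conv by (simp add: mult.commute)
    moreover have "hat_kernel a a = (\<lambda>d. if d = 0 then 1 else 0)" using hat_self[of a, OF a0] by (rule ext)
    ultimately show ?thesis using toeplitz_one by simp
  qed
  have "Ainv = Ainv * 1\<^sub>m n" using A by simp
  also have "\<dots> = Ainv * (toeplitz_L n a * toeplitz_L n (doc a))" by (simp add: r)
  also have "\<dots> = (Ainv * toeplitz_L n a) * toeplitz_L n (doc a)"
    by (rule assoc_mult_mat[OF A toeplitz_carrier toeplitz_carrier, symmetric])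
  also have "\<dots> = toeplitz_L n (doc a)" by (simp add: inv)
  finally show ?thesis .
qed

lemma doc_mult: "toeplitz_L n (doc a) * toeplitz_L n c = toeplitz_L n (hat_kernel a c)"
  unfolding toeplitz_mult hat_kernel_def ..

lemma quad_toeplitz:
  fixes x y :: "real Matrix.vec"
  assumes x: "x \<in> carrier_vec n" and y: "y \<in> carrier_vec n"
  shows "scalar_prod y (toeplitz_L n g *\<^sub>v x) = (\<Sum>i<n. \<Sum>j\<le>i. g (i - j) * (x $ j) * (y $ i))"
proof -
  have "scalar_prod y (toeplitz_L n g *\<^sub>v x) = (\<Sum>i<n. y $ i * (\<Sum>j<n. (if j \<le> i then g (i - j) else 0) * x $ j))"
    using x y unfolding scalar_prod_def by (intro sum.cong) (auto simp: toeplitz_index lessThan_atLeast0 scalar_prod_def)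
  also have "\<dots> = (\<Sum>i<n. \<Sum>j\<le>i. g (i - j) * (x $ j) * (y $ i))"
  proof (rule sum.cong[OF refl])
    fix i assume i: "i \<in> {..<n}"
    have "(\<Sum>j<n. (if j \<le> i then g (i - j) else 0) * x $ j) = (\<Sum>j<n. (if j \<le> i then g (i - j) * x $ j else 0))"
      by (intro sum.cong) auto
    also have "\<dots> = (\<Sum>j\<in>{j\<in>{..<n}. j \<le> i}. g (i - j) * x $ j)"
      by (rule sum.inter_filter[symmetric]) simp
    also have "{j\<in>{..<n}. j \<le> i} = {..i}" using i by auto
    finally show "y $ i * (\<Sum>j<n. (if j \<le> i then g (i - j) else 0) * x $ j) = (\<Sum>j\<le>i. g (i - j) * (x $ j) * (y $ i))"
      by (simp add: sum_distrib_left mult.commute mult.left_commute)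
  qed
  finally show ?thesis .
qed

lemma self_prod: "(x :: real Matrix.vec) \<in> carrier_vec n \<Longrightarrow> scalar_prod x x = (\<Sum>i<n. (x $ i)^2)"
  unfolding scalar_prod_def by (simp add: power2_eq_square lessThan_atLeast0)



lemma nz_disk:
  fixes a :: "nat \<Rightarrow> real"
  assumes a0: "a 0 \<noteq> 0" and a_ext: "\<And>j. j \<ge> k \<Longrightarrow> a j = 0"
    and zs: "root_condition (rho_poly k a)"
    and a_nz: "\<And>\<theta>. 0 \<le> \<theta> \<Longrightarrow> \<theta> < 2 * pi \<Longrightarrow> symb k a \<theta> \<noteq> 0"
    and z: "cmod z \<le> 1"
  shows "poly (pol k a) z \<noteq> 0"
proof
  assume root: "poly (pol k a) z = 0"
  have kpos: "k > 0" using a0 a_ext by (cases k) auto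
  consider "z = 0" | "cmod z = 1" | "0 < cmod z \<and> cmod z < 1" using z by fastforce
  then show False
  proof cases
    case 1
    have "poly (pol k a) 0 = complex_of_real (a 0)" using kpos by (simp add: poly_0_coeff_0 coeff_pol)
    thus False using root 1 a0 by simp
  next
    case 2
    define r where "r = Arg2pi z"
    have r: "0 \<le> r" "r < 2 * pi" "z = complex_of_real (cmod z) * exp (\<i> * complex_of_real r)"
      using Arg2pi[of z] unfolding r_def is_Arg_def by auto
    hence "z = exp (\<i> * complex_of_real r)" using 2 by simp
    hence "symb k a r = 0" using root by (simp add: symb_poly)
    thus False using a_nz r by blast
  next
    case 3
    define w where "w = inverse z"
    have z0: "z \<noteq> 0" using 3 by auto
    have wz: "w * z = 1" unfolding w_def using z0 by simp
    have cw: "cmod w > 1" unfolding w_def using 3 by (simp add: norm_inverse one_less_inverse)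
    have pw: "w ^ (k - Suc j) = w ^ (k - Suc 0) * z ^ j" if "j < k" for j
    proof -
      have "w ^ (k - Suc 0) = w ^ (k - Suc j) * w ^ j" using that by (simp add: power_add[symmetric])
      hence "w ^ (k - Suc 0) * z ^ j = w ^ (k - Suc j) * (w * z) ^ j" by (simp add: power_mult_distrib)
      thus ?thesis using wz by simp
    qed
    have "poly (rho_poly k a) w = (w - 1) * (\<Sum>j<k. complex_of_real (a j) * w ^ (k - j - 1))"
      unfolding rho_poly_def by (simp add: poly_sum poly_monom algebra_simps)
    also have "(\<Sum>j<k. complex_of_real (a j) * w ^ (k - j - 1)) = w ^ (k - 1) * poly (pol k a) z"
      unfolding pol_def poly_sum poly_monom sum_distrib_left
    proof (intro sum.cong refl)
      fix j assume "j \<in> {..<k}"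
      hence "w ^ (k - j - 1) = w ^ (k - 1) * z ^ j" using pw[of j] by simp
      thus "complex_of_real (a j) * w ^ (k - j - 1) = w ^ (k - 1) * (complex_of_real (a j) * z ^ j)"
        by (simp only: mult.left_commute)
    qed
    finally have "poly (rho_poly k a) w = 0" using root by simp
    hence "cmod w \<le> 1" using zs unfolding root_condition_def by blast
    thus False using cw by simp
  qed
qed

lemma shift_sum: "(\<Sum>i=1..n. f i) = (\<Sum>i<n. f (Suc i))"
  by (induction n) auto

lemma shift_bil:
  "(\<Sum>i=1..n. \<Sum>j=1..i. G (i - j) * v j * u i) = (\<Sum>i<n. \<Sum>j\<le>i. G (i - j) * v (Suc j) * u (Suc i))"
  unfolding shift_sum by (simp add: lessThan_Suc_atMost)



lemma quad_entries:
  fixes A :: "real mat" and v :: "real Matrix.vec"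
  assumes A: "A \<in> carrier_mat n n" and v: "v \<in> carrier_vec n"
  shows "scalar_prod v (A *\<^sub>v v) = (\<Sum>i<n. \<Sum>j<n. A $$ (i, j) * v $ j * v $ i)"
  using A v unfolding scalar_prod_def
  by (auto simp: lessThan_atLeast0 sum_distrib_left sum_distrib_right mult.commute mult.left_commute scalar_prod_def intro!: sum.cong)

lemma sym_part:
  fixes M :: "real mat" and v :: "real Matrix.vec"
  assumes M: "M \<in> carrier_mat n n" and v: "v \<in> carrier_vec n"
  shows "scalar_prod v (((1/2) \<cdot>\<^sub>m (M + transpose_mat M)) *\<^sub>v v) = scalar_prod v (M *\<^sub>v v)"
proof -
  have S: "(1/2) \<cdot>\<^sub>m (M + transpose_mat M) \<in> carrier_mat n n" using M by auto
  have "scalar_prod v (((1/2) \<cdot>\<^sub>m (M + transpose_mat M)) *\<^sub>v v)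
     = (\<Sum>i<n. \<Sum>j<n. ((1/2) \<cdot>\<^sub>m (M + transpose_mat M)) $$ (i, j) * v $ j * v $ i)"
    by (rule quad_entries[OF S v])
  also have "\<dots> = (\<Sum>i<n. \<Sum>j<n. (1/2) * (M $$ (i, j) * v $ j * v $ i) + (1/2) * (M $$ (j, i) * v $ j * v $ i))"
    using M by (intro sum.cong refl) (auto simp: algebra_simps)
  also have "\<dots> = (1/2) * (\<Sum>i<n. \<Sum>j<n. M $$ (i, j) * v $ j * v $ i) + (1/2) * (\<Sum>i<n. \<Sum>j<n. M $$ (j, i) * v $ j * v $ i)"
    by (simp add: sum.distrib sum_distrib_left)
  also have "(\<Sum>i<n. \<Sum>j<n. M $$ (j, i) * v $ j * v $ i) = (\<Sum>i<n. \<Sum>j<n. M $$ (i, j) * v $ j * v $ i)"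
    by (subst sum.swap) (simp add: mult.commute mult.left_commute)
  also have "(1/2) * (\<Sum>i<n. \<Sum>j<n. M $$ (i, j) * v $ j * v $ i) + (1/2) * (\<Sum>i<n. \<Sum>j<n. M $$ (i, j) * v $ j * v $ i)
      = (\<Sum>i<n. \<Sum>j<n. M $$ (i, j) * v $ j * v $ i)" by simp
  also have "\<dots> = scalar_prod v (M *\<^sub>v v)" by (rule quad_entries[OF M v, symmetric])
  finally show ?thesis .
qed

lemma vnorm2_sq: "(x :: real Matrix.vec) \<in> carrier_vec n \<Longrightarrow> vnorm2 x = sqrt (\<Sum>i<n. (x $ i)^2)"
  unfolding vnorm2_def by (simp add: self_prod)

lemma spec_bound:
  fixes T :: "real mat" and S :: real
  assumes n: "n \<ge> 1" and T: "T \<in> carrier_mat n n" and S: "S > 0"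
    and bil: "\<And>x y. x \<in> carrier_vec n \<Longrightarrow> y \<in> carrier_vec n \<Longrightarrow>
       scalar_prod y (T *\<^sub>v x) \<le> S * sqrt (\<Sum>i<n. (x $ i)^2) * sqrt (\<Sum>i<n. (y $ i)^2)"
  shows "spectral_norm T \<le> S"
  unfolding spectral_norm_def
proof (rule cSUP_least)
  have u: "unit_vec n 0 \<in> carrier_vec n" by simp
  have "(\<Sum>i<n. (unit_vec n 0 $ i)^2) = (\<Sum>i<n. (if i = 0 then 1 else 0 :: real))"
    by (intro sum.cong refl) simp
  also have "\<dots> = 1" using n by simp
  finally have "vnorm2 (unit_vec n 0) = 1" using vnorm2_sq[OF u] by simp
  thus "{x \<in> carrier_vec (dim_col T). vnorm2 x = 1} \<noteq> {}" using u T by blast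
next
  fix x assume "x \<in> {x \<in> carrier_vec (dim_col T). vnorm2 x = 1}"
  hence x: "x \<in> carrier_vec n" and x1: "vnorm2 x = 1" using T by auto
  define y where "y = T *\<^sub>v x"
  have y: "y \<in> carrier_vec n" unfolding y_def using T x by simp
  have yy: "(vnorm2 y)^2 = scalar_prod y y" unfolding vnorm2_def y_def
    using T x by (simp add: self_prod[OF mult_mat_vec_carrier[OF T x]] sum_nonneg)
  have "scalar_prod y y \<le> S * sqrt (\<Sum>i<n. (x $ i)^2) * sqrt (\<Sum>i<n. (y $ i)^2)"
    using bil[OF x y] unfolding y_def .
  also have "\<dots> = S * vnorm2 y" using x1 vnorm2_sq[OF x] vnorm2_sq[OF y] by simp
  finally have le: "(vnorm2 y)^2 \<le> S * vnorm2 y" using yy by simp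
  have "vnorm2 y \<le> S"
  proof (cases "vnorm2 y = 0")
    case True thus ?thesis using S by simp
  next
    case False
    hence "vnorm2 y > 0" unfolding vnorm2_def by (simp add: order_le_neq_trans self_prod[OF y] sum_nonneg)
    thus ?thesis using le by (simp add: power2_eq_square)
  qed
  thus "vnorm2 (T *\<^sub>v x) \<le> S" unfolding y_def .
qed

lemma eig_bound:
  fixes M :: "real mat" and L :: real
  assumes M: "M \<in> carrier_mat n n"
    and q: "\<And>v. v \<in> carrier_vec n \<Longrightarrow> L * (\<Sum>i<n. (v $ i)^2) \<le> scalar_prod v (M *\<^sub>v v)"
    and ev: "eigenvalue ((1/2) \<cdot>\<^sub>m (M + transpose_mat M)) \<mu>"
  shows "L \<le> \<mu>"
proof -
  obtain v where v: "v \<in> carrier_vec n" and v0: "v \<noteq> 0\<^sub>v n"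
    and Sv: "((1/2) \<cdot>\<^sub>m (M + transpose_mat M)) *\<^sub>v v = \<mu> \<cdot>\<^sub>v v"
    using ev M unfolding eigenvalue_def eigenvector_def by auto
  obtain i where i: "i < n" "v $ i \<noteq> 0"
    using v v0 by (metis carrier_vecD eq_vecI index_zero_vec(1) index_zero_vec(2))
  have pos: "(\<Sum>i<n. (v $ i)^2) > 0"
  proof -
    have "(v $ i)^2 \<le> (\<Sum>i<n. (v $ i)^2)"
      using i by (intro member_le_sum) auto
    moreover have "(v $ i)^2 > 0" using i by simp
    ultimately show ?thesis by linarith
  qed
  have "\<mu> * (\<Sum>i<n. (v $ i)^2) = scalar_prod v (\<mu> \<cdot>\<^sub>v v)"
    using v by (simp add: self_prod)
  also have "\<dots> = scalar_prod v (M *\<^sub>v v)" using sym_part[OF M v] Sv by simp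
  finally have "L * (\<Sum>i<n. (v $ i)^2) \<le> \<mu> * (\<Sum>i<n. (v $ i)^2)" using q[OF v] by simp
  thus ?thesis using pos by simp
qed



theorem lemma2p4:
  fixes k :: nat and a b c :: "nat \<Rightarrow> real" and sigF sigE lamI :: real
  assumes k: "k \<ge> 1"
    and pos: "a 0 > 0" "b 0 > 0" "c 0 > 0"
    and a_ext: "\<And>j. j \<ge> k \<Longrightarrow> a j = 0"
    and c_ext: "\<And>j. j \<ge> k \<Longrightarrow> c j = 0"
    and b_ext: "\<And>j. j \<ge> k + 1 \<Longrightarrow> b j = 0"
    and zs: "zero_stable k a b c"
    and a_nz: "\<And>\<theta>. 0 \<le> \<theta> \<Longrightarrow> \<theta> < 2 * pi \<Longrightarrow> symb k a \<theta> \<noteq> 0"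
    and sigF_max: "\<forall>\<theta>\<in>{0..<2*pi}. cmod (1 / symb k a \<theta>) \<le> sigF"
                "\<exists>\<theta>\<in>{0..<2*pi}. cmod (1 / symb k a \<theta>) = sigF"
    and sigE_max: "\<forall>\<theta>\<in>{0..<2*pi}. cmod (symb k c \<theta> / symb k a \<theta>) \<le> sigE"
                "\<exists>\<theta>\<in>{0..<2*pi}. cmod (symb k c \<theta> / symb k a \<theta>) = sigE"
    and lamI_min: "\<forall>\<theta>\<in>{0..<2*pi}. lamI \<le> Re (symb (k + 1) b \<theta> / symb k a \<theta>)"
                "\<exists>\<theta>\<in>{0..<2*pi}. Re (symb (k + 1) b \<theta> / symb k a \<theta>) = lamI"
    and consts_pos: "sigF > 0" "sigE > 0" "lamI > 0"
  shows "(\<forall>n\<ge>1. \<forall>Ainv \<in> carrier_mat n n. Ainv * toeplitz_L n a = 1\<^sub>m n \<longrightarrow>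
            spectral_norm Ainv \<le> sigF
          \<and> spectral_norm (Ainv * toeplitz_L n c) \<le> sigE
          \<and> (\<forall>\<mu>. eigenvalue ((1/2) \<cdot>\<^sub>m (Ainv * toeplitz_L n b + transpose_mat (Ainv * toeplitz_L n b))) \<mu>
                 \<longrightarrow> lamI \<le> \<mu>))
       \<and> (\<forall>(v::nat \<Rightarrow> real) (u::nat \<Rightarrow> real) n. n \<ge> 1 \<longrightarrow>
            (\<Sum>i=1..n. \<Sum>j=1..i. hat_kernel a b (i - j) * v j * v i) \<ge> lamI * (\<Sum>i=1..n. \<bar>v i\<bar>^2)
          \<and> (\<Sum>i=1..n. \<Sum>j=1..i. doc a (i - j) * v j * u i)
               \<le> sigF * sqrt (\<Sum>i=1..n. \<bar>v i\<bar>^2) * sqrt (\<Sum>i=1..n. \<bar>u i\<bar>^2)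
          \<and> (\<Sum>i=1..n. \<Sum>j=1..i. hat_kernel a c (i - j) * v j * u i)
               \<le> sigE * sqrt (\<Sum>i=1..n. \<bar>v i\<bar>^2) * sqrt (\<Sum>i=1..n. \<bar>u i\<bar>^2))"
proof -
  have a0: "a 0 \<noteq> 0" using pos(1) by simp
  have nz: "\<And>z. cmod z \<le> 1 \<Longrightarrow> poly (pol k a) z \<noteq> 0"
    using nz_disk[OF a0 a_ext _ a_nz] zs unfolding zero_stable_def by blast
  define d :: "nat \<Rightarrow> real" where "d m = (if m = 0 then 1 else 0)" for m
  have hd: "hat_kernel a d = doc a"
  proof
    fix j
    have "(\<Sum>i=0..j. doc a (j - i) * d i) = (\<Sum>i\<in>{0}. doc a (j - i) * d i)"
      by (intro sum.mono_neutral_right) (auto simp: d_def)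
    thus "hat_kernel a d j = doc a j" unfolding hat_kernel_def by (simp add: d_def)
  qed
  have sd: "symb 1 d x = 1" for x by (simp add: symb_def d_def)
  have d_ext: "\<And>j. j \<ge> 1 \<Longrightarrow> d j = 0" by (simp add: d_def)
  have b_ext': "\<And>j. j \<ge> k + 1 \<Longrightarrow> b j = 0" using b_ext .
  note SF = series_symb[where a=a and p=d and k=k and K=1, OF a0 a_ext d_ext nz]
  note SC = series_symb[where a=a and p=c and k=k and K=k, OF a0 a_ext c_ext nz]
  note SB = series_symb[where a=a and p=b and k=k and K="k+1", OF a0 a_ext b_ext nz]
  have bilF: "(\<Sum>i<n. \<Sum>j\<le>i. doc a (i - j) * v j * u i) \<le> sigF * sqrt (\<Sum>i<n. (v i)^2) * sqrt (\<Sum>i<n. (u i)^2)"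
    for v u :: "nat \<Rightarrow> real" and n
  proof -
    have "(\<Sum>i<n. \<Sum>j\<le>i. hat_kernel a d (i - j) * v j * u i) \<le> sigF * sqrt (\<Sum>i<n. (v i)^2) * sqrt (\<Sum>i<n. (u i)^2)"
    proof (rule lim_bil[OF SF])
      fix x :: real assume "0 \<le> x" "x < 2 * pi"
      thus "cmod (symb 1 d x / symb k a x) \<le> sigF" using sigF_max(1) sd[of x] by simp
    qed
    thus ?thesis unfolding hd .
  qed
  have bilC: "(\<Sum>i<n. \<Sum>j\<le>i. hat_kernel a c (i - j) * v j * u i) \<le> sigE * sqrt (\<Sum>i<n. (v i)^2) * sqrt (\<Sum>i<n. (u i)^2)"
    for v u :: "nat \<Rightarrow> real" and n
  proof (rule lim_bil[OF SC])
    fix x :: real assume "0 \<le> x" "x < 2 * pi"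
    thus "cmod (symb k c x / symb k a x) \<le> sigE" using sigE_max(1) by simp
  qed
  have reB: "lamI * (\<Sum>i<n. (v i)^2) \<le> (\<Sum>i<n. \<Sum>j\<le>i. hat_kernel a b (i - j) * v j * v i)"
    for v :: "nat \<Rightarrow> real" and n
  proof (rule lim_re[OF SB])
    fix x :: real assume "0 \<le> x" "x < 2 * pi"
    thus "lamI \<le> Re (symb (k + 1) b x / symb k a x)" using lamI_min(1) by simp
  qed
  have sq: "(\<Sum>i=1..n. \<bar>w i\<bar>^2) = (\<Sum>i<n. (w (Suc i))^2)" for w :: "nat \<Rightarrow> real" and n
    unfolding shift_sum by simp
  have part2: "\<forall>(v::nat \<Rightarrow> real) (u::nat \<Rightarrow> real) n. n \<ge> 1 \<longrightarrow>
            (\<Sum>i=1..n. \<Sum>j=1..i. hat_kernel a b (i - j) * v j * v i) \<ge> lamI * (\<Sum>i=1..n. \<bar>v i\<bar>^2)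
          \<and> (\<Sum>i=1..n. \<Sum>j=1..i. doc a (i - j) * v j * u i)
               \<le> sigF * sqrt (\<Sum>i=1..n. \<bar>v i\<bar>^2) * sqrt (\<Sum>i=1..n. \<bar>u i\<bar>^2)
          \<and> (\<Sum>i=1..n. \<Sum>j=1..i. hat_kernel a c (i - j) * v j * u i)
               \<le> sigE * sqrt (\<Sum>i=1..n. \<bar>v i\<bar>^2) * sqrt (\<Sum>i=1..n. \<bar>u i\<bar>^2)"
  proof (intro allI impI conjI)
    fix v u :: "nat \<Rightarrow> real" and n :: nat
    show "(\<Sum>i=1..n. \<Sum>j=1..i. hat_kernel a b (i - j) * v j * v i) \<ge> lamI * (\<Sum>i=1..n. \<bar>v i\<bar>^2)"
      unfolding shift_bil sq using reB[of "\<lambda>i. v (Suc i)" n] by simp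
    show "(\<Sum>i=1..n. \<Sum>j=1..i. doc a (i - j) * v j * u i)
               \<le> sigF * sqrt (\<Sum>i=1..n. \<bar>v i\<bar>^2) * sqrt (\<Sum>i=1..n. \<bar>u i\<bar>^2)"
      unfolding shift_bil sq using bilF[of "\<lambda>i. v (Suc i)" "\<lambda>i. u (Suc i)" n] by simp
    show "(\<Sum>i=1..n. \<Sum>j=1..i. hat_kernel a c (i - j) * v j * u i)
               \<le> sigE * sqrt (\<Sum>i=1..n. \<bar>v i\<bar>^2) * sqrt (\<Sum>i=1..n. \<bar>u i\<bar>^2)"
      unfolding shift_bil sq using bilC[of "\<lambda>i. v (Suc i)" "\<lambda>i. u (Suc i)" n] by simp
  qed
  have part1: "\<forall>n\<ge>1. \<forall>Ainv \<in> carrier_mat n n. Ainv * toeplitz_L n a = 1\<^sub>m n \<longrightarrow>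
            spectral_norm Ainv \<le> sigF
          \<and> spectral_norm (Ainv * toeplitz_L n c) \<le> sigE
          \<and> (\<forall>\<mu>. eigenvalue ((1/2) \<cdot>\<^sub>m (Ainv * toeplitz_L n b + transpose_mat (Ainv * toeplitz_L n b))) \<mu>
                 \<longrightarrow> lamI \<le> \<mu>)"
  proof (intro allI impI ballI conjI)
    fix n :: nat and Ainv :: "real mat"
    assume n: "n \<ge> 1" and A: "Ainv \<in> carrier_mat n n" and inv: "Ainv * toeplitz_L n a = 1\<^sub>m n"
    have Aeq: "Ainv = toeplitz_L n (doc a)" by (rule ainv_eq[OF a0 A inv])
    show "spectral_norm Ainv \<le> sigF"
      unfolding Aeq
    proof (rule spec_bound[OF n toeplitz_carrier consts_pos(1)])
      fix x y :: "real Matrix.vec" assume x: "x \<in> carrier_vec n" and y: "y \<in> carrier_vec n"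
      show "scalar_prod y (toeplitz_L n (doc a) *\<^sub>v x) \<le> sigF * sqrt (\<Sum>i<n. (x $ i)^2) * sqrt (\<Sum>i<n. (y $ i)^2)"
        unfolding quad_toeplitz[OF x y] by (rule bilF)
    qed
    show "spectral_norm (Ainv * toeplitz_L n c) \<le> sigE"
      unfolding Aeq doc_mult
    proof (rule spec_bound[OF n toeplitz_carrier consts_pos(2)])
      fix x y :: "real Matrix.vec" assume x: "x \<in> carrier_vec n" and y: "y \<in> carrier_vec n"
      show "scalar_prod y (toeplitz_L n (hat_kernel a c) *\<^sub>v x) \<le> sigE * sqrt (\<Sum>i<n. (x $ i)^2) * sqrt (\<Sum>i<n. (y $ i)^2)"
        unfolding quad_toeplitz[OF x y] by (rule bilC)
    qed
    fix \<mu> :: real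
    assume ev: "eigenvalue ((1/2) \<cdot>\<^sub>m (Ainv * toeplitz_L n b + transpose_mat (Ainv * toeplitz_L n b))) \<mu>"
    show "lamI \<le> \<mu>"
    proof (rule eig_bound[OF toeplitz_carrier _ ev[unfolded Aeq doc_mult]])
      fix v :: "real Matrix.vec" assume v: "v \<in> carrier_vec n"
      show "lamI * (\<Sum>i<n. (v $ i)^2) \<le> scalar_prod v (toeplitz_L n (hat_kernel a b) *\<^sub>v v)"
        unfolding quad_toeplitz[OF v v] by (rule reB)
    qed
  qed
  show ?thesis using part1 part2 by blast
qed


end
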